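(* Assume bifurcation assumption (B) with non-critical maximal cells, fix a root subnetwork $B$, and let $p\in C\setminus B$ be critical (hence non-maximal). Assume hypothesis (H) at $p$ and condition (L). Then generically: (i) if $\bigl(\sum_{\tau\notin\mathcal L_p}a_\tau d_{\tau(p)}+\ell\bigr)/\sum_{\sigma,\tau\in\mathcal L_p}f_{\sigma\tau}>0$, the $p$-th bifurcation equation has no solution branches near $0$ for small $\lambda>0$; (ii) if $\bigl(\sum_{\tau\notin\mathcal L_p}a_\tau d_{\tau(p)}+\ell\bigr)/\sum_{\sigma,\tau\in\mathcal L_p}f_{\sigma\tau}<0$, it has the two (saddle-node) branches $x_p(\lambda)=d_p^\pm\sqrt{\lambda}+O(|\lambda|)$ for small $\lambda>0$, with $$d_p^\pm=\pm\sqrt{-\frac{\sum_{\tau\notin\mathcal L_p}a_\tau d_{\tau(p)}+\ell}{\sum_{\sigma,\tau\in\mathcal L_p}f_{\sigma\tau}}}\neq0.$$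
   Context: Network: finite cells $C$, pairwise distinct maps $\Sigma=\{\sigma_1,\dots,\sigma_n\}$, $\sigma_i\colon C\to C$, $\sigma_1=\mathrm{Id}_C$; feedforward (no cycles of length $\ge 2$); $p\trianglelefteq q$ iff there is a path from $q$ to $p$ (partial order), $q\vartriangleright p$ iff $p\trianglelefteq q$, $p\neq q$; maximal cells have $\sigma(p)=p$ for all $\sigma$. $\Sigma(p)=\{\sigma(p):\sigma\in\Sigma\}$, $\Sigma^\star(p)=\Sigma(p)\setminus\{p\}$. Bifurcation setting: $V=\mathbb R$, smooth $f\colon\mathbb R^n\times\mathbb R\to\mathbb R$ with first $n$ arguments labelled by $\Sigma$, $\gamma_f(x,\lambda)_p=f(x_{\sigma_1(p)},\dots,x_{\sigma_n(p)},\lambda)$; the $p$-th bifurcation equation $\gamma_f(x,\lambda)_p=0$ is solved for $x_p$ near 0 given $x_q(\lambda)$ for $q\vartriangleright p$. $a_\sigma=\partial_\sigma f(0,0)$, $f_{\sigma\tau}=\tfrac12\partial_\sigma\partial_\tau f(0,0)$, $\ell=\partial_\lambda f(0,0)$. $\mathcal L_p=\{\sigma:\sigma(p)=p\}$; $p$ critical iff $\sum_{\sigma\in\mathcal L_p}a_\sigma=0$. (B): $f(0,0)=0$, some cell critical, exactly the cells sharing $\mathcal L_p$ with a critical cell are critical. Root subnetwork: a subnetwork ($\sigma(B)\subset B$ for all $\sigma$) $\emptyset\ne B\subsetneq C$ containing all maximal cells such that every $p\notin B$ with all $q\vartriangleright p$ in $B$ is critical. Hypothesis (H) at $p$: for all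 $q\vartriangleright p$ and small $\lambda>0$, $x_q(\lambda)=d_q\lambda^{2^{-\xi_q}}+O(|\lambda|^{2^{-(\xi_q-1)}})$ with $d_q\ne0$ and integers $\xi_q\ge0$; $\Xi_p=\max_{q\in\Sigma^\star(p)}\xi_q$. Condition (L): $\Xi_p=0$ and $\sum_{\tau\notin\mathcal L_p}a_\tau d_{\tau(p)}+\ell\ne0$. "Generically" means for an open dense set of Taylor coefficients of $f$ at $(0,0)$ (in particular $\sum_{\sigma,\tau\in\mathcal L_p}f_{\sigma\tau}\ne0$). *)

theory Defs
  imports "HOL-Analysis.Analysis" "HOL-Library.Landau_Symbols"
begin

text \<open>Network data: cells form a finite type 'c (so C = UNIV), the maps of
  \<Sigma> are indexed by a finite type 's via sg :: 's \<Rightarrow> 'c \<Rightarrow> 'c (so n = CARD('s)),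
  and the arguments of f are labelled by 's, i.e. f :: real^'s \<times> real \<Rightarrow> real.\<close>

definition edges :: "('s \<Rightarrow> 'c \<Rightarrow> 'c) \<Rightarrow> ('c \<times> 'c) set" where
  "edges sg = {(sg s c, c) | s c. True}"

text \<open>below sg p q : p \<unlhd> q, i.e. there is a path from q to p.\<close>
definition below :: "('s \<Rightarrow> 'c \<Rightarrow> 'c) \<Rightarrow> 'c \<Rightarrow> 'c \<Rightarrow> bool" where
  "below sg p q \<longleftrightarrow> (q, p) \<in> (edges sg)\<^sup>*"

definition strictly_above :: "('s \<Rightarrow> 'c \<Rightarrow> 'c) \<Rightarrow> 'c \<Rightarrow> 'c \<Rightarrow> bool" where
  "strictly_above sg q p \<longleftrightarrow> below sg p q \<and> p \<noteq> q"

definition feedforward :: "('s \<Rightarrow> 'c \<Rightarrow> 'c) \<Rightarrow> bool" where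
  "feedforward sg \<longleftrightarrow> (\<forall>p q. below sg p q \<and> below sg q p \<longrightarrow> p = q)"

definition network :: "('s::finite \<Rightarrow> 'c::finite \<Rightarrow> 'c) \<Rightarrow> 's \<Rightarrow> bool" where
  "network sg s1 \<longleftrightarrow> inj sg \<and> sg s1 = id \<and> feedforward sg"

definition maximal :: "('s \<Rightarrow> 'c \<Rightarrow> 'c) \<Rightarrow> 'c \<Rightarrow> bool" where
  "maximal sg p \<longleftrightarrow> \<not> (\<exists>q. strictly_above sg q p)"

definition Sigma_img :: "('s \<Rightarrow> 'c \<Rightarrow> 'c) \<Rightarrow> 'c \<Rightarrow> 'c set" where
  "Sigma_img sg p = (\<lambda>s. sg s p) ` UNIV"

definition Sigma_star :: "('s \<Rightarrow> 'c \<Rightarrow> 'c) \<Rightarrow> 'c \<Rightarrow> 'c set" where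
  "Sigma_star sg p = Sigma_img sg p - {p}"

definition Lp :: "('s \<Rightarrow> 'c \<Rightarrow> 'c) \<Rightarrow> 'c \<Rightarrow> 's set" where
  "Lp sg p = {s. sg s p = p}"

fun Ck :: "nat \<Rightarrow> ('a::real_normed_vector \<Rightarrow> real) \<Rightarrow> bool" where
  "Ck 0 g \<longleftrightarrow> continuous_on UNIV g"
| "Ck (Suc k) g \<longleftrightarrow> (\<forall>x. g differentiable (at x)) \<and>
                     (\<forall>v. Ck k (\<lambda>x. frechet_derivative g (at x) v))"

definition smooth :: "('a::real_normed_vector \<Rightarrow> real) \<Rightarrow> bool" where
  "smooth g \<longleftrightarrow> (\<forall>k. Ck k g)"

definition acoef :: "((real^('s::finite)) \<times> real \<Rightarrow> real) \<Rightarrow> 's \<Rightarrow> real" where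
  "acoef f s = deriv (\<lambda>t. f (axis s t, 0)) 0"

definition fcoef :: "((real^('s::finite)) \<times> real \<Rightarrow> real) \<Rightarrow> 's \<Rightarrow> 's \<Rightarrow> real" where
  "fcoef f s t = (1/2) * deriv (\<lambda>u. deriv (\<lambda>v. f (axis s u + axis t v, 0)) 0) 0"

definition lcoef :: "((real^('s::finite)) \<times> real \<Rightarrow> real) \<Rightarrow> real" where
  "lcoef f = deriv (\<lambda>l. f (0, l)) 0"

definition critical :: "('s::finite \<Rightarrow> 'c \<Rightarrow> 'c) \<Rightarrow> ((real^('s::finite)) \<times> real \<Rightarrow> real) \<Rightarrow> 'c \<Rightarrow> bool" where
  "critical sg f p \<longleftrightarrow> (\<Sum>s\<in>Lp sg p. acoef f s) = 0"

definition condB :: "('s::finite \<Rightarrow> 'c \<Rightarrow> 'c) \<Rightarrow> ((real^('s::finite)) \<times> real \<Rightarrow> real) \<Rightarrow> bool" where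
  "condB sg f \<longleftrightarrow> f (0, 0) = 0 \<and> (\<exists>p. critical sg f p) \<and>
     (\<forall>p. critical sg f p \<longleftrightarrow> (\<exists>q. critical sg f q \<and> Lp sg p = Lp sg q))"

definition subnetwork :: "('s \<Rightarrow> 'c \<Rightarrow> 'c) \<Rightarrow> 'c set \<Rightarrow> bool" where
  "subnetwork sg B \<longleftrightarrow> (\<forall>s. sg s ` B \<subseteq> B)"

definition root_subnetwork ::
  "('s::finite \<Rightarrow> 'c \<Rightarrow> 'c) \<Rightarrow> ((real^('s::finite)) \<times> real \<Rightarrow> real) \<Rightarrow> 'c set \<Rightarrow> bool" where
  "root_subnetwork sg f B \<longleftrightarrow> subnetwork sg B \<and> B \<noteq> {} \<and> B \<noteq> UNIV \<and>
     {p. maximal sg p} \<subseteq> B \<and>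
     (\<forall>p. p \<notin> B \<and> (\<forall>q. strictly_above sg q p \<longrightarrow> q \<in> B) \<longrightarrow> critical sg f p)"

definition gamma ::
  "((real^('s::finite)) \<times> real \<Rightarrow> real) \<Rightarrow> ('s \<Rightarrow> 'c \<Rightarrow> 'c) \<Rightarrow> ('c \<Rightarrow> real) \<Rightarrow> real \<Rightarrow> 'c \<Rightarrow> real" where
  "gamma f sg x l p = f (\<chi> s. x (sg s p), l)"

definition hypH ::
  "('s \<Rightarrow> 'c \<Rightarrow> 'c) \<Rightarrow> ('c \<Rightarrow> real \<Rightarrow> real) \<Rightarrow> ('c \<Rightarrow> real) \<Rightarrow> ('c \<Rightarrow> nat) \<Rightarrow> 'c \<Rightarrow> bool" where
  "hypH sg xs d xi p \<longleftrightarrow> (\<forall>q. strictly_above sg q p \<longrightarrow>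
      d q \<noteq> 0 \<and>
      (\<lambda>l. xs q l - d q * l powr (2 powr (- real (xi q))))
        \<in> O[at_right 0](\<lambda>l. l powr (2 powr (- (real (xi q) - 1)))))"

definition Xi :: "('s \<Rightarrow> 'c \<Rightarrow> 'c) \<Rightarrow> ('c \<Rightarrow> nat) \<Rightarrow> 'c \<Rightarrow> nat" where
  "Xi sg xi p = Max (xi ` Sigma_star sg p)"

definition Acoef ::
  "('s::finite \<Rightarrow> 'c \<Rightarrow> 'c) \<Rightarrow> ((real^('s::finite)) \<times> real \<Rightarrow> real) \<Rightarrow> ('c \<Rightarrow> real) \<Rightarrow> 'c \<Rightarrow> real" where
  "Acoef sg f d p = (\<Sum>t\<in>UNIV - Lp sg p. acoef f t * d (sg t p)) + lcoef f"

definition Fcoef :: "('s::finite \<Rightarrow> 'c \<Rightarrow> 'c) \<Rightarrow> ((real^('s::finite)) \<times> real \<Rightarrow> real) \<Rightarrow> 'c \<Rightarrow> real" where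
  "Fcoef sg f p = (\<Sum>s\<in>Lp sg p. \<Sum>t\<in>Lp sg p. fcoef f s t)"

definition condL ::
  "('s::finite \<Rightarrow> 'c \<Rightarrow> 'c) \<Rightarrow> ((real^('s::finite)) \<times> real \<Rightarrow> real) \<Rightarrow> ('c \<Rightarrow> real) \<Rightarrow> ('c \<Rightarrow> nat) \<Rightarrow> 'c \<Rightarrow> bool" where
  "condL sg f d xi p \<longleftrightarrow> Xi sg xi p = 0 \<and> Acoef sg f d p \<noteq> 0"

text \<open>The p-th bifurcation equation, as a function of the unknown x_p = y,
  with the upstream values x_q = xs q \<lambda> inserted.\<close>
definition peq ::
  "((real^('s::finite)) \<times> real \<Rightarrow> real) \<Rightarrow> ('s \<Rightarrow> 'c \<Rightarrow> 'c) \<Rightarrow> ('c \<Rightarrow> real \<Rightarrow> real) \<Rightarrow> 'c \<Rightarrow> real \<Rightarrow> real \<Rightarrow> real" where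
  "peq f sg xs p y l = gamma f sg ((\<lambda>c. xs c l)(p := y)) l p"

end

theory Submission
  imports Defs
begin

definition Dd :: "('a::real_normed_vector \<Rightarrow> real) \<Rightarrow> 'a \<Rightarrow> 'a \<Rightarrow> real" where
  "Dd g v = (\<lambda>x. frechet_derivative g (at x) v)"

lemma smooth_cont: "smooth g \<Longrightarrow> continuous_on UNIV g"
  unfolding smooth_def by (metis Ck.simps(1))

lemma smooth_diff: "smooth g \<Longrightarrow> g differentiable (at x)"
  unfolding smooth_def by (metis Ck.simps(2))

lemma smooth_Dd: "smooth g \<Longrightarrow> smooth (Dd g v)"
  unfolding smooth_def Dd_def by (metis Ck.simps(2))

lemma smooth_hasder: "smooth g \<Longrightarrow> (g has_derivative frechet_derivative g (at x)) (at x)"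
  using smooth_diff frechet_derivative_works by blast

lemma smooth_linear: "smooth g \<Longrightarrow> linear (frechet_derivative g (at x))"
  using smooth_hasder has_derivative_linear by blast

lemma smooth_line:
  assumes "smooth g"
  shows "((\<lambda>t. g (x + t *\<^sub>R v)) has_real_derivative Dd g v (x + t *\<^sub>R v)) (at t)"
proof -
  have d1: "((\<lambda>t. x + t *\<^sub>R v) has_derivative (\<lambda>h. h *\<^sub>R v)) (at t)"
    by (auto intro!: derivative_eq_intros)
  have "((\<lambda>t. g (x + t *\<^sub>R v)) has_derivative
          (\<lambda>h. frechet_derivative g (at (x + t *\<^sub>R v)) (h *\<^sub>R v))) (at t)"
    using has_derivative_compose[OF d1 smooth_hasder[OF assms]] by (simp add: o_def)
  moreover have "(\<lambda>h. frechet_derivative g (at (x + t *\<^sub>R v)) (h *\<^sub>R v)) = (\<lambda>h. h * Dd g v (x + t *\<^sub>R v))"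
    using smooth_linear[OF assms] by (auto simp: Dd_def linear_scale)
  moreover have "(\<lambda>h. h * Dd g v (x + t *\<^sub>R v)) = (*) (Dd g v (x + t *\<^sub>R v))"
    by (auto simp: mult.commute)
  ultimately show ?thesis unfolding has_field_derivative_def by simp
qed

lemma Dd_sum:
  assumes "smooth g" "finite S"
  shows "Dd g (\<Sum>i\<in>S. c i *\<^sub>R v i) x = (\<Sum>i\<in>S. c i * Dd g (v i) x)"
  using smooth_linear[OF assms(1)] assms(2)
  by (simp add: Dd_def linear_sum linear_scale)

lemma Dd_add:
  assumes "smooth g"
  shows "Dd g (u + v) x = Dd g u x + Dd g v x"
  using smooth_linear[OF assms(1)] by (simp add: Dd_def linear_add)

lemma smooth_lip:
  fixes g :: "'a::euclidean_space \<Rightarrow> real"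
  assumes "smooth g"
  shows "\<exists>K. \<forall>u w. norm u \<le> 1 \<longrightarrow> norm w \<le> 1 \<longrightarrow> \<bar>g u - g w\<bar> \<le> K * norm (u - w)"
proof -
  have "\<exists>M. \<forall>x\<in>cball 0 1. \<bar>Dd g b x\<bar> \<le> M" for b
  proof -
    have "continuous_on (cball 0 1) (Dd g b)"
      using smooth_cont[OF smooth_Dd[OF assms]] continuous_on_subset by blast
    then have "bounded (Dd g b ` cball 0 1)"
      by (intro compact_imp_bounded compact_continuous_image) auto
    then show ?thesis by (auto simp: bounded_iff)
  qed
  then obtain M where M: "\<And>b x. x \<in> cball 0 1 \<Longrightarrow> \<bar>Dd g b x\<bar> \<le> M b" by metis
  define B where "B = (\<Sum>b\<in>Basis. M b)"
  have on: "onorm (frechet_derivative g (at x)) \<le> B" if x: "x \<in> cball 0 1" for x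
  proof (rule onorm_le)
    fix y :: 'a
    have "frechet_derivative g (at x) y = Dd g (\<Sum>b\<in>Basis. (y \<bullet> b) *\<^sub>R b) x"
      by (simp add: Dd_def euclidean_representation)
    also have "\<dots> = (\<Sum>b\<in>Basis. (y \<bullet> b) * Dd g b x)"
      by (rule Dd_sum[OF assms]) simp
    finally have eq: "frechet_derivative g (at x) y = (\<Sum>b\<in>Basis. (y \<bullet> b) * Dd g b x)" .
    have "\<bar>\<Sum>b\<in>Basis. (y \<bullet> b) * Dd g b x\<bar> \<le> (\<Sum>b\<in>Basis. \<bar>(y \<bullet> b) * Dd g b x\<bar>)"
      by (rule sum_abs)
    also have "\<dots> \<le> (\<Sum>b\<in>Basis. norm y * M b)"
    proof (rule sum_mono)
      fix b :: 'a assume b: "b \<in> Basis"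
      have "\<bar>y \<bullet> b\<bar> \<le> norm y" using Basis_le_norm[OF b] .
      moreover have "\<bar>Dd g b x\<bar> \<le> M b" using M x .
      ultimately show "\<bar>(y \<bullet> b) * Dd g b x\<bar> \<le> norm y * M b"
        by (simp add: abs_mult mult_mono')
    qed
    also have "\<dots> = B * norm y" by (simp add: B_def sum_distrib_left mult.commute)
    finally show "norm (frechet_derivative g (at x) y) \<le> B * norm y" using eq by simp
  qed
  have "\<bar>g u - g w\<bar> \<le> B * norm (u - w)" if "norm u \<le> 1" "norm w \<le> 1" for u w
    using differentiable_bound[of "cball 0 1" g "\<lambda>x. frechet_derivative g (at x)" B u w]
      on that has_derivative_at_withinI[OF smooth_hasder[OF assms]]
    by auto
  then show ?thesis by blast
qed

lemma taylor2:
  fixes \<phi> \<phi>1 \<phi>2 :: "real \<Rightarrow> real"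
  assumes d1: "\<And>y. \<bar>y\<bar> < r \<Longrightarrow> (\<phi> has_real_derivative \<phi>1 y) (at y)"
    and d2: "\<And>y. \<bar>y\<bar> < r \<Longrightarrow> (\<phi>1 has_real_derivative \<phi>2 y) (at y)"
    and y: "\<bar>y\<bar> < r"
  shows "\<exists>\<xi>. \<bar>\<xi>\<bar> \<le> \<bar>y\<bar> \<and> \<phi> y = \<phi> 0 + \<phi>1 0 * y + \<phi>2 \<xi> / 2 * y^2"
proof (cases "y = 0")
  case True then show ?thesis by (intro exI[of _ 0]) simp
next
  case False
  define diff where "diff = (\<lambda>m::nat. if m = 0 then \<phi> else if m = 1 then \<phi>1 else \<phi>2)"
  have D: "\<forall>m t. m < 2 \<and> - \<bar>y\<bar> \<le> t \<and> t \<le> \<bar>y\<bar> \<longrightarrow> DERIV (diff m) t :> diff (Suc m) t"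
  proof (intro allI impI)
    fix m t assume a: "m < (2::nat) \<and> - \<bar>y\<bar> \<le> t \<and> t \<le> \<bar>y\<bar>"
    then have t: "\<bar>t\<bar> < r" using y by auto
    from a have "m = 0 \<or> m = 1" by auto
    then show "DERIV (diff m) t :> diff (Suc m) t"
      using d1[OF t] d2[OF t] by (auto simp: diff_def)
  qed
  have "\<exists>t. (if y < 0 then y < t \<and> t < 0 else 0 < t \<and> t < y) \<and>
      \<phi> y = (\<Sum>m<2. diff m 0 / fact m * (y - 0)^m) + diff 2 t / fact 2 * (y - 0)^2"
    by (rule Taylor[of 2 diff \<phi> "-\<bar>y\<bar>" "\<bar>y\<bar>"]) (use D False in \<open>auto simp: diff_def\<close>)
  then obtain t where t: "(if y < 0 then y < t \<and> t < 0 else 0 < t \<and> t < y)"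
    and eq: "\<phi> y = (\<Sum>m<2. diff m 0 / fact m * (y - 0)^m) + diff 2 t / fact 2 * (y - 0)^2" by blast
  have "(\<Sum>m<2. diff m 0 / fact m * (y - 0)^m) = \<phi> 0 + \<phi>1 0 * y"
    by (simp add: numeral_2_eq_2 diff_def)
  moreover have "diff 2 t / fact 2 * (y - 0)^2 = \<phi>2 t / 2 * y^2"
    by (simp add: diff_def numeral_2_eq_2)
  moreover have "\<bar>t\<bar> \<le> \<bar>y\<bar>" using t by (auto split: if_splits)
  ultimately show ?thesis using eq by metis
qed

lemma err_bound:
  fixes \<phi> \<phi>1 \<phi>2 :: "real \<Rightarrow> real"
  assumes d1: "\<And>y. \<bar>y\<bar> < r \<Longrightarrow> (\<phi> has_real_derivative \<phi>1 y) (at y)"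
    and d2: "\<And>y. \<bar>y\<bar> < r \<Longrightarrow> (\<phi>1 has_real_derivative \<phi>2 y) (at y)"
    and b2: "\<And>y. \<bar>y\<bar> < r \<Longrightarrow> \<bar>\<phi>2 y - 2*F\<bar> \<le> c*(\<bar>y\<bar>+l)"
    and b0: "\<bar>\<phi> 0 - A*l\<bar> \<le> c*l^2" and b1: "\<bar>\<phi>1 0\<bar> \<le> c*l"
    and y: "\<bar>y\<bar> < r" and c: "c \<ge> 0"
  shows "\<bar>\<phi> y - (A*l + F*y^2)\<bar> \<le> c*l^2 + c*l*\<bar>y\<bar> + c*(\<bar>y\<bar>+l)*y^2/2"
proof -
  obtain \<xi> where \<xi>: "\<bar>\<xi>\<bar> \<le> \<bar>y\<bar>" and eq: "\<phi> y = \<phi> 0 + \<phi>1 0 * y + \<phi>2 \<xi> / 2 * y^2"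
    using taylor2[OF d1 d2 y] by blast
  have "\<phi> y - (A*l + F*y^2) = (\<phi> 0 - A*l) + \<phi>1 0 * y + (\<phi>2 \<xi> - 2*F) * y^2 / 2"
    using eq by (simp add: field_simps)
  moreover have "\<bar>\<phi>1 0 * y\<bar> \<le> c*l*\<bar>y\<bar>"
    using b1 by (simp add: abs_mult mult_right_mono)
  moreover have "\<bar>(\<phi>2 \<xi> - 2*F) * y^2 / 2\<bar> \<le> c*(\<bar>y\<bar>+l)*y^2/2"
  proof -
    have "\<bar>\<phi>2 \<xi> - 2*F\<bar> \<le> c*(\<bar>y\<bar>+l)"
      using b2[of \<xi>] \<xi> y c by (smt (verit) mult_left_mono)
    then show ?thesis by (simp add: abs_mult mult_right_mono)
  qed
  ultimately show ?thesis using b0 by (smt (verit))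
qed

definition PW :: "(real\<Rightarrow>real) \<Rightarrow> (real\<Rightarrow>real) \<Rightarrow> (real\<Rightarrow>real) \<Rightarrow> real \<Rightarrow> real \<Rightarrow> real \<Rightarrow> real \<Rightarrow> real \<Rightarrow> bool" where
 "PW \<phi> \<phi>1 \<phi>2 r A F c l \<longleftrightarrow> (\<forall>y. \<bar>y\<bar> < r \<longrightarrow> (\<phi> has_real_derivative \<phi>1 y) (at y) \<and>
     (\<phi>1 has_real_derivative \<phi>2 y) (at y) \<and> \<bar>\<phi>2 y - 2*F\<bar> \<le> c*(\<bar>y\<bar>+l)) \<and>
     \<bar>\<phi> 0 - A*l\<bar> \<le> c*l^2 \<and> \<bar>\<phi>1 0\<bar> \<le> c*l"

lemma PW_err:
  assumes "PW \<phi> \<phi>1 \<phi>2 r A F c l" "\<bar>y\<bar> < r" "c \<ge> 0"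
  shows "\<bar>\<phi> y - (A*l + F*y^2)\<bar> \<le> c*l^2 + c*l*\<bar>y\<bar> + c*(\<bar>y\<bar>+l)*y^2/2"
  using assms unfolding PW_def by (intro err_bound[of r \<phi> \<phi>1 \<phi>2 F c l A]) auto

lemma pos_pt:
  assumes pw: "PW \<phi> \<phi>1 \<phi>2 r A F c l" and F: "F > 0" and c: "c > 0" and A: "A > 0"
    and l: "0 < l" "c*l \<le> F/2" "l*(c + c^2/(2*F)) < A"
    and y: "\<bar>y\<bar> < min r (F/(2*c))"
  shows "\<phi> y > 0"
proof -
  have e: "\<bar>\<phi> y - (A*l + F*y^2)\<bar> \<le> c*l^2 + c*l*\<bar>y\<bar> + c*(\<bar>y\<bar>+l)*y^2/2"
    using PW_err[OF pw] y c by auto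
  have "c*\<bar>y\<bar> \<le> F/2" using y c by (simp add: field_simps)
  then have "c*(\<bar>y\<bar>+l) \<le> F" using l by (simp add: algebra_simps)
  then have "c*(\<bar>y\<bar>+l)*y^2/2 \<le> F*y^2/2" by (simp add: mult_right_mono)
  moreover have "F*y^2/2 - c*l*\<bar>y\<bar> + c^2*l^2/(2*F) = (F/2)*(\<bar>y\<bar> - c*l/F)^2"
    using F by (simp add: field_simps power2_eq_square)
  moreover have "(F/2)*(\<bar>y\<bar> - c*l/F)^2 \<ge> 0" using F by simp
  moreover have "l*(A - l*(c + c^2/(2*F))) > 0" using l by simp
  moreover have "l*(A - l*(c + c^2/(2*F))) = A*l - c*l^2 - c^2*l^2/(2*F)"
    by (simp add: field_simps power2_eq_square)
  ultimately show ?thesis using e by linarith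
qed

lemma uniq_pt:
  assumes pw: "PW \<phi> \<phi>1 \<phi>2 r A F c l" and F: "F > 0" and c: "c > 0"
    and neg: "\<phi> 0 < 0" and l: "0 < l" "c*l < F"
    and y: "0 < y1" "y1 < y2" "y2 < min r (F/(2*c))" "\<phi> y1 = 0" "\<phi> y2 = 0"
  shows False
proof -
  define \<delta> where "\<delta> = min r (F/(2*c))"
  have d1: "\<And>y. \<bar>y\<bar> < \<delta> \<Longrightarrow> (\<phi> has_real_derivative \<phi>1 y) (at y)"
   and d2: "\<And>y. \<bar>y\<bar> < \<delta> \<Longrightarrow> (\<phi>1 has_real_derivative \<phi>2 y) (at y)"
   and b2: "\<And>y. \<bar>y\<bar> < \<delta> \<Longrightarrow> \<bar>\<phi>2 y - 2*F\<bar> \<le> c*(\<bar>y\<bar>+l)"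
    using pw unfolding PW_def \<delta>_def by auto
  have pos2: "\<phi>2 y > 0" if "\<bar>y\<bar> < \<delta>" for y
  proof -
    have "c*\<bar>y\<bar> < F/2" using that c unfolding \<delta>_def by (simp add: field_simps)
    then show ?thesis using b2[OF that] l by (simp add: algebra_simps abs_le_iff)
  qed
  obtain z1 where z1: "0 < z1" "z1 < y1" "\<phi> y1 - \<phi> 0 = (y1 - 0) * \<phi>1 z1"
    using MVT2[of 0 y1 \<phi> \<phi>1] d1 y unfolding \<delta>_def by force
  obtain z2 where z2: "y1 < z2" "z2 < y2" "\<phi> y2 - \<phi> y1 = (y2 - y1) * \<phi>1 z2"
    using MVT2[of y1 y2 \<phi> \<phi>1] d1 y unfolding \<delta>_def by force
  obtain w where w: "z1 < w" "w < z2" "\<phi>1 z2 - \<phi>1 z1 = (z2 - z1) * \<phi>2 w"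
    using MVT2[of z1 z2 \<phi>1 \<phi>2] d2 y z1 z2 unfolding \<delta>_def by force
  have "\<phi>1 z1 > 0" using z1 neg y by (metis diff_0_right diff_gt_0_iff_gt less_numeral_extra(3) zero_less_mult_pos)
  moreover have "\<phi>1 z2 = 0" using z2 y by simp
  moreover have "\<phi>2 w > 0" using pos2[of w] w z1 z2 y unfolding \<delta>_def by auto
  ultimately show False using w by (smt (verit) mult_pos_pos)
qed

lemma calc_e:
  fixes c dp s t K y :: real
  assumes c: "c > 0" and dp: "dp > 0" and s: "0 < s" "s \<le> 1" "K* s \<le> 1" and t: "\<bar>t\<bar> \<le> K"
    and y: "y = dp* s + t* s^2"
  shows "c*(s^2)^2 + c* s^2*\<bar>y\<bar> + c*(\<bar>y\<bar>+s^2)*y^2/2 \<le> c*(2 + dp + (dp+2)*(dp+1)^2/2) * s^3"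
proof -
  have "\<bar>t\<bar>* s \<le> 1" using t s by (smt (verit) mult_right_mono)
  then have "\<bar>t* s^2\<bar> \<le> s" using s by (simp add: abs_mult power2_eq_square)
  moreover have "\<bar>y\<bar> \<le> \<bar>dp* s\<bar> + \<bar>t* s^2\<bar>" using y abs_triangle_ineq by simp
  moreover have "\<bar>dp* s\<bar> = dp* s" using dp s by simp
  ultimately have ya: "\<bar>y\<bar> \<le> (dp+1)* s" by (simp add: algebra_simps)
  have y0: "0 \<le> \<bar>y\<bar>" by simp
  have s2: "s^2 \<le> s" using s by (simp add: power2_eq_square mult_left_le)
  have a1: "c*(s^2)^2 \<le> c* s^3"
  proof -
    have "(s^2)^2 \<le> s^3" using s by (simp add: power_decreasing flip: power_mult)
    then show ?thesis using c by simp
  qed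
  have a2: "c* s^2*\<bar>y\<bar> \<le> c* s^2*((dp+1)* s)" using ya c by (simp add: mult_left_mono)
  have yy: "y^2 \<le> ((dp+1)* s)^2" using ya by (metis abs_ge_zero power2_abs power_mono)
  have ys: "\<bar>y\<bar>+s^2 \<le> (dp+2)* s" using ya s2 by (simp add: algebra_simps)
  have a3: "(\<bar>y\<bar>+s^2)*y^2 \<le> ((dp+2)* s)*((dp+1)* s)^2"
    by (rule mult_mono[OF ys yy]) (use dp s in auto)
  have a3': "c*(\<bar>y\<bar>+s^2)*y^2/2 \<le> c*(((dp+2)* s)*((dp+1)* s)^2)/2"
    using mult_left_mono[OF a3, of c] c by simp
  have "c*(2 + dp + (dp+2)*(dp+1)^2/2) * s^3 = c* s^3 + c* s^2*((dp+1)* s) + c*(((dp+2)* s)*((dp+1)* s)^2)/2"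
    by (simp add: algebra_simps power2_eq_square power3_eq_cube)
  then show ?thesis using a1 a2 a3' by linarith
qed

lemma exist_pt:
  fixes s :: real
  assumes pw: "PW \<phi> \<phi>1 \<phi>2 r A F c l" and F: "F > 0" and c: "c > 0" and A: "A < 0"
    and dpd: "dp = sqrt (-A/F)"
    and Md: "M = c*(2 + dp + (dp+2)*(dp+1)^2/2)" and Kd: "K = M/(F*dp) + 1"
    and l: "0 < l" and sd: "s = sqrt l" and s: "s \<le> 1" "K * s \<le> 1" "K^2 * s \<le> 2*dp" "K * s < dp"
      "(dp+1) * s < min r (F/(2*c))"
  shows "\<exists>y. 0 < y \<and> y < min r (F/(2*c)) \<and> \<phi> y = 0 \<and> \<bar>y - dp * s\<bar> \<le> K*l"
proof -
  have s0: "0 < s" using sd l by simp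
  have ls: "l = s^2" using sd l by simp
  have dp0: "dp > 0" using dpd A F by (simp add: divide_neg_pos)
  have Fdp: "F*dp^2 = -A" using dpd A F by (simp add: divide_neg_pos less_eq_real_def)
  have M0: "M > 0" using Md c dp0 by (simp add: add_pos_nonneg)
  have K0: "K > 0" using Kd M0 F dp0 by (simp add: add_pos_nonneg)
  have FdK: "F*dp*K = M + F*dp" using Kd F dp0 by (simp add: field_simps)
  define y where "y = (\<lambda>t. dp* s + t* s^2)"
  have ybd: "\<bar>y t\<bar> \<le> (dp+1)* s" if "\<bar>t\<bar> \<le> K" for t
  proof -
    have "\<bar>t\<bar>* s \<le> 1" using that s s0 by (smt (verit) mult_right_mono)
    then have "\<bar>t* s^2\<bar> \<le> s" using s0 by (simp add: abs_mult power2_eq_square)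
    moreover have "\<bar>y t\<bar> \<le> \<bar>dp* s\<bar> + \<bar>t* s^2\<bar>" unfolding y_def using abs_triangle_ineq by simp
    moreover have "\<bar>dp* s\<bar> = dp* s" using dp0 s0 by simp
    ultimately show ?thesis by (simp add: algebra_simps)
  qed
  have err: "\<bar>\<phi> (y t) - F*(2*dp*t* s^3 + t^2 * s^4)\<bar> \<le> M * s^3" if "\<bar>t\<bar> \<le> K" for t
  proof -
    have yr: "\<bar>y t\<bar> < r" using ybd[OF that] s(5) by simp
    have "\<bar>\<phi> (y t) - (A*l + F*(y t)^2)\<bar> \<le> c*l^2 + c*l*\<bar>y t\<bar> + c*(\<bar>y t\<bar>+l)*(y t)^2/2"
      using PW_err[OF pw yr] c by simp
    also have "\<dots> \<le> M * s^3"
      using calc_e[OF c dp0 s0 s(1) s(2) that, of "y t"] unfolding ls Md y_def by simp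
    finally have "\<bar>\<phi> (y t) - (A*l + F*(y t)^2)\<bar> \<le> M * s^3" .
    moreover have "A*l + F*(y t)^2 = F*(2*dp*t* s^3 + t^2 * s^4)"
    proof -
      have "F*(y t)^2 = (F*dp^2)* s^2 + F*(2*dp*t* s^3 + t^2 * s^4)"
        unfolding y_def by (simp add: algebra_simps power2_eq_square power3_eq_cube power4_eq_xxxx)
      then show ?thesis unfolding ls using Fdp by simp
    qed
    ultimately show ?thesis by simp
  qed
  have s3: "s^3 > 0" using s0 by simp
  have pb: "\<phi> (y K) > 0"
  proof -
    have "F*(2*dp*K* s^3 + K^2 * s^4) \<ge> 2*(F*dp*K)* s^3"
      using F by (simp add: algebra_simps)
    then have "F*(2*dp*K* s^3 + K^2 * s^4) \<ge> 2*(M + F*dp)* s^3" using FdK by simp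
    moreover have "F*dp* s^3 > 0" using F dp0 s3 by simp
    ultimately show ?thesis using err[of K] K0 by (simp add: abs_le_iff algebra_simps)
  qed
  have pa: "\<phi> (y (-K)) < 0"
  proof -
    have "F*K^2 * s^4 \<le> F*(2*dp)* s^3"
    proof -
      have "K^2 * s^4 = (K^2 * s) * s^3" by (simp add: power_def algebra_simps)
      also have "\<dots> \<le> (2*dp)* s^3" using s(3) s3 by (simp add: mult_right_mono)
      finally show ?thesis using F by simp
    qed
    moreover have "F*(2*dp*(-K)* s^3 + (-K)^2 * s^4) = -2*(F*dp*K)* s^3 + F*K^2 * s^4"
      by (simp add: algebra_simps)
    ultimately have "F*(2*dp*(-K)* s^3 + (-K)^2 * s^4) \<le> -2*(M + F*dp)* s^3 + F*(2*dp)* s^3"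
      using FdK by simp
    moreover have "M * s^3 > 0" using M0 s3 by simp
    moreover have "\<bar>-K\<bar> \<le> K" using K0 by simp
    ultimately show ?thesis using err[of "-K"] by (simp add: abs_le_iff algebra_simps)
  qed
  have a0: "0 < y (-K)" unfolding y_def using s(4) s0
    by (simp add: power2_eq_square)
  have ab: "y (-K) \<le> y K" unfolding y_def using K0 by simp
  have bd: "y K \<le> (dp+1)* s" using ybd[of K] K0 by simp
  have cont: "continuous_on {y (-K) .. y K} \<phi>"
  proof (intro continuous_at_imp_continuous_on ballI)
    fix x assume "x \<in> {y (-K) .. y K}"
    then have "\<bar>x\<bar> < r" using a0 bd s(5) by auto
    then show "isCont \<phi> x" using pw unfolding PW_def by (auto intro: DERIV_isCont)
  qed
  obtain x where x: "y (-K) \<le> x" "x \<le> y K" "\<phi> x = 0"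
    using IVT'[of \<phi> "y (-K)" 0 "y K", OF _ _ ab cont] pa pb by auto
  have "\<bar>x - dp * s\<bar> \<le> K*l" using x unfolding y_def ls by (simp add: abs_le_iff)
  moreover have "x < min r (F/(2*c))" using x bd s(5) by linarith
  ultimately show ?thesis using x a0 by (intro exI[of _ x]) auto
qed

lemma PW_refl:
  assumes "PW \<phi> \<phi>1 \<phi>2 r A F c l"
  shows "PW (\<lambda>y. \<phi> (-y)) (\<lambda>y. - \<phi>1 (-y)) (\<lambda>y. \<phi>2 (-y)) r A F c l"
  unfolding PW_def
proof (intro conjI allI impI)
  fix y :: real assume y: "\<bar>y\<bar> < r"
  then have my: "\<bar>-y\<bar> < r" by simp
  have d1: "(\<phi> has_real_derivative \<phi>1 (-y)) (at (-y))" and d2: "(\<phi>1 has_real_derivative \<phi>2 (-y)) (at (-y))"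
    and b: "\<bar>\<phi>2 (-y) - 2*F\<bar> \<le> c*(\<bar>-y\<bar>+l)"
    using assms my unfolding PW_def by blast+
  show "((\<lambda>y. \<phi> (-y)) has_real_derivative - \<phi>1 (-y)) (at y)"
    using DERIV_mirror[where f=\<phi> and x=y and y="\<phi>1 (-y)"] d1 by simp
  have "((\<lambda>y. \<phi>1 (-y)) has_real_derivative - \<phi>2 (-y)) (at y)"
    using DERIV_mirror[where f=\<phi>1 and x=y and y="\<phi>2 (-y)"] d2 by simp
  then show "((\<lambda>y. - \<phi>1 (-y)) has_real_derivative \<phi>2 (-y)) (at y)"
    using DERIV_minus by fastforce
  show "\<bar>\<phi>2 (-y) - 2*F\<bar> \<le> c*(\<bar>y\<bar>+l)" using b by simp
qed (use assms in \<open>auto simp: PW_def\<close>)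

lemma ev_small: "e > 0 \<Longrightarrow> \<forall>\<^sub>F l in at_right (0::real). l < e"
  using order_tendstoD(2)[OF tendsto_ident_at, of 0 e "{0<..}"] by simp

lemma ev_sqrt_small: "e > 0 \<Longrightarrow> \<forall>\<^sub>F l in at_right (0::real). sqrt l < e"
proof -
  assume e: "e > 0"
  have "((\<lambda>l. sqrt l) \<longlongrightarrow> sqrt 0) (at_right (0::real))"
    by (intro tendsto_real_sqrt tendsto_ident_at)
  then show ?thesis using order_tendstoD(2) e by fastforce
qed

lemma alg:
  fixes \<phi> \<phi>1 \<phi>2 :: "real \<Rightarrow> real \<Rightarrow> real"
  assumes F: "F > 0" and c: "c > 0" and r: "r > 0"
    and ev: "\<forall>\<^sub>F l in at_right 0. PW (\<phi> l) (\<phi>1 l) (\<phi>2 l) r A F c l"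
  shows "(A > 0 \<longrightarrow> (\<exists>\<delta>>0. \<forall>\<^sub>F l in at_right 0. \<forall>y. \<bar>y\<bar> < \<delta> \<longrightarrow> \<phi> l y \<noteq> 0))
   \<and> (A < 0 \<longrightarrow> (\<exists>\<delta>>0. \<exists>xp xm :: real \<Rightarrow> real.
              (\<forall>\<^sub>F l in at_right 0. {y. \<bar>y\<bar> < \<delta> \<and> \<phi> l y = 0} = {xp l, xm l}) \<and>
              (\<lambda>l. xp l - sqrt (-A/F) * sqrt l) \<in> O[at_right 0](\<lambda>l. l) \<and>
              (\<lambda>l. xm l - (- sqrt (-A/F)) * sqrt l) \<in> O[at_right 0](\<lambda>l. l)))"
proof (intro conjI impI)
  define \<delta> where "\<delta> = min r (F/(2*c))"
  have \<delta>0: "\<delta> > 0" using F c r by (simp add: \<delta>_def)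
  {
    assume A: "A > 0"
    have e1: "F/(2*c) > 0" "A/(c + c^2/(2*F)) > 0" using F c A by (auto intro!: divide_pos_pos add_pos_pos)
    have "\<forall>\<^sub>F l in at_right 0. \<forall>y. \<bar>y\<bar> < \<delta> \<longrightarrow> \<phi> l y \<noteq> 0"
      using ev eventually_at_right_less[of 0] ev_small[OF e1(1)] ev_small[OF e1(2)]
    proof eventually_elim
      case (elim l)
      have "c*l \<le> F/2" using elim c by (simp add: field_simps)
      moreover have "l*(c + c^2/(2*F)) < A"
        using elim(4) F c by (simp add: field_simps add_pos_pos)
      ultimately show ?case using pos_pt[OF elim(1) F c A elim(2)] unfolding \<delta>_def
        by (metis less_irrefl)
    qed
    then show "\<exists>\<delta>>0. \<forall>\<^sub>F l in at_right 0. \<forall>y. \<bar>y\<bar> < \<delta> \<longrightarrow> \<phi> l y \<noteq> 0" using \<delta>0 by blast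
  }
  assume A: "A < 0"
  define dp where "dp = sqrt (-A/F)"
  define M where "M = c*(2 + dp + (dp+2)*(dp+1)^2/2)"
  define K where "K = M/(F*dp) + 1"
  have dp0: "dp > 0" using A F by (simp add: dp_def divide_neg_pos)
  have M0: "M > 0" using c dp0 by (simp add: M_def add_pos_nonneg)
  have K0: "K > 0" using M0 F dp0 by (simp add: K_def add_pos_nonneg)
  define e where "e = Min {1, 1/K, 2*dp/K^2, dp/K, \<delta>/(dp+1)}"
  have e0: "e > 0" unfolding e_def using K0 dp0 \<delta>0 by simp
  have ee: "e \<le> 1" "e \<le> 1/K" "e \<le> 2*dp/K^2" "e \<le> dp/K" "e \<le> \<delta>/(dp+1)" unfolding e_def by auto
  have e2: "-A/c > 0" "F/c > 0" using A F c by (auto simp: divide_neg_pos)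
  define good where "good l \<longleftrightarrow> PW (\<phi> l) (\<phi>1 l) (\<phi>2 l) r A F c l \<and> 0 < l \<and> l < -A/c \<and> l < F/c \<and> sqrt l < e" for l
  have evg: "\<forall>\<^sub>F l in at_right 0. good l"
    using ev eventually_at_right_less[of 0] ev_small[OF e2(1)] ev_small[OF e2(2)] ev_sqrt_small[OF e0]
    unfolding good_def by eventually_elim auto
  have key: "\<phi> l 0 < 0 \<and> c*l < F \<and>
     (\<exists>y. 0 < y \<and> y < \<delta> \<and> \<phi> l y = 0 \<and> \<bar>y - dp * sqrt l\<bar> \<le> K*l) \<and>
     (\<exists>y. 0 < y \<and> y < \<delta> \<and> \<phi> l (-y) = 0 \<and> \<bar>y - dp * sqrt l\<bar> \<le> K*l)" if g: "good l" for l
  proof -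
    have pw: "PW (\<phi> l) (\<phi>1 l) (\<phi>2 l) r A F c l" and l: "0 < l" "l < -A/c" "l < F/c" "sqrt l < e"
      using g unfolding good_def by auto
    have "\<phi> l 0 \<le> A*l + c*l^2" using pw unfolding PW_def by (simp add: abs_le_iff)
    moreover have "c*l < -A" using l(2) c by (simp add: field_simps)
    then have "(A + c*l)*l < 0" using l(1) by (simp add: mult_neg_pos)
    then have "A*l + c*l^2 < 0" by (simp add: algebra_simps power2_eq_square)
    ultimately have neg: "\<phi> l 0 < 0" by linarith
    have cl: "c*l < F" using l(3) c by (simp add: field_simps)
    let ?s = "sqrt l"
    have s0: "?s > 0" using l by simp
    have sc: "?s \<le> 1" "K * ?s \<le> 1" "K^2 * ?s \<le> 2*dp" "K * ?s < dp" "(dp+1) * ?s < min r (F/(2*c))"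
    proof -
      have se: "?s < e" using l(4) by simp
      have ke: "K*e \<le> 1" "K^2*e \<le> 2*dp" "K*e \<le> dp" "(dp+1)*e \<le> \<delta>"
        using ee K0 dp0 by (simp_all add: field_simps)
      show "?s \<le> 1" using l(4) ee by linarith
      show "K * ?s \<le> 1" using mult_strict_left_mono[OF se K0] ke by linarith
      have "K^2 * ?s < K^2 * e" using mult_strict_left_mono[OF se] K0 by simp
      then show "K^2 * ?s \<le> 2*dp" using ke by linarith
      show "K * ?s < dp" using mult_strict_left_mono[OF se K0] ke by linarith
      have "(dp+1) * ?s < (dp+1) * e" using mult_strict_left_mono[OF se] dp0 by simp
      then show "(dp+1) * ?s < min r (F/(2*c))" using ke unfolding \<delta>_def by linarith
    qed
    have ex1: "\<exists>y. 0 < y \<and> y < \<delta> \<and> \<phi> l y = 0 \<and> \<bar>y - dp * ?s\<bar> \<le> K*l"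
      using exist_pt[OF pw F c A dp_def M_def K_def l(1) refl sc] unfolding \<delta>_def .
    have ex2: "\<exists>y. 0 < y \<and> y < \<delta> \<and> \<phi> l (-y) = 0 \<and> \<bar>y - dp * ?s\<bar> \<le> K*l"
      using exist_pt[OF PW_refl[OF pw] F c A dp_def M_def K_def l(1) refl sc] unfolding \<delta>_def .
    show ?thesis using neg cl ex1 ex2 by blast
  qed
  define xp where "xp l = (SOME y. 0 < y \<and> y < \<delta> \<and> \<phi> l y = 0 \<and> \<bar>y - dp * sqrt l\<bar> \<le> K*l)" for l
  define xm' where "xm' l = (SOME y. 0 < y \<and> y < \<delta> \<and> \<phi> l (-y) = 0 \<and> \<bar>y - dp * sqrt l\<bar> \<le> K*l)" for l
  define xm where "xm l = - xm' l" for l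
  have xp: "0 < xp l \<and> xp l < \<delta> \<and> \<phi> l (xp l) = 0 \<and> \<bar>xp l - dp * sqrt l\<bar> \<le> K*l" if "good l" for l
    unfolding xp_def using key[OF that] by (rule someI_ex[OF conjunct1[OF conjunct2[OF conjunct2]]])
  have xm: "0 < xm' l \<and> xm' l < \<delta> \<and> \<phi> l (- xm' l) = 0 \<and> \<bar>xm' l - dp * sqrt l\<bar> \<le> K*l" if "good l" for l
    unfolding xm'_def using key[OF that] by (rule someI_ex[OF conjunct2[OF conjunct2[OF conjunct2]]])
  have uq: "ya = yb" if g: "good l" and y: "0 < ya" "ya < \<delta>" "\<eta> ya = 0" "0 < yb" "yb < \<delta>" "\<eta> yb = 0"
    and pw: "PW \<eta> \<eta>a \<eta>b r A F c l" and n: "\<eta> 0 < 0" for l ya yb \<eta> \<eta>a \<eta>b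
  proof -
    have l: "0 < l" "c*l < F" using key[OF g] g unfolding good_def by auto
    show ?thesis
    proof (rule linorder_cases[of ya yb])
      assume "ya < yb" then show ?thesis
        using uniq_pt[OF pw F c n l, of ya yb] y unfolding \<delta>_def by auto
    next
      assume "yb < ya" then show ?thesis
        using uniq_pt[OF pw F c n l, of yb ya] y unfolding \<delta>_def by auto
    qed
  qed
  have seteq: "\<forall>\<^sub>F l in at_right 0. {y. \<bar>y\<bar> < \<delta> \<and> \<phi> l y = 0} = {xp l, xm l}"
    using evg
  proof eventually_elim
    case (elim l)
    have pw: "PW (\<phi> l) (\<phi>1 l) (\<phi>2 l) r A F c l" using elim unfolding good_def by auto
    have n: "\<phi> l 0 < 0" using key[OF elim] by auto
    note p = xp[OF elim] and m = xm[OF elim]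
    show ?case
    proof (intro equalityI subsetI)
      fix y assume "y \<in> {y. \<bar>y\<bar> < \<delta> \<and> \<phi> l y = 0}"
      then have y: "\<bar>y\<bar> < \<delta>" "\<phi> l y = 0" by auto
      consider "y = 0" | "y > 0" | "y < 0" by linarith
      then show "y \<in> {xp l, xm l}"
      proof cases
        case 1 then show ?thesis using y n by simp
      next
        case 2
        then have "y = xp l" using uq[OF elim, where ya=y and yb="xp l" and \<eta>="\<phi> l" and \<eta>a="\<phi>1 l" and \<eta>b="\<phi>2 l"] y p pw n by auto
        then show ?thesis by simp
      next
        case 3
        then have "-y = xm' l"
          using uq[OF elim, where ya="-y" and yb="xm' l" and \<eta>="\<lambda>y. \<phi> l (-y)" and \<eta>a="\<lambda>y. - \<phi>1 l (-y)" and \<eta>b="\<lambda>y. \<phi>2 l (-y)"] PW_refl[OF pw] y m n by auto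
        then show ?thesis by (simp add: xm_def)
      qed
    next
      fix y assume "y \<in> {xp l, xm l}"
      then show "y \<in> {y. \<bar>y\<bar> < \<delta> \<and> \<phi> l y = 0}" using p m by (auto simp: xm_def)
    qed
  qed
  have o1: "(\<lambda>l. xp l - dp * sqrt l) \<in> O[at_right 0](\<lambda>l. l)"
  proof (rule bigoI[where c = K])
    show "\<forall>\<^sub>F l in at_right 0. norm (xp l - dp * sqrt l) \<le> K * norm l"
      using evg by eventually_elim (use xp in \<open>auto simp: good_def\<close>)
  qed
  have o2: "(\<lambda>l. xm l - (- dp) * sqrt l) \<in> O[at_right 0](\<lambda>l. l)"
  proof (rule bigoI[where c = K])
    show "\<forall>\<^sub>F l in at_right 0. norm (xm l - (- dp) * sqrt l) \<le> K * norm l"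
      using evg
    proof eventually_elim
      case (elim l)
      have "\<bar>xm l - (- dp) * sqrt l\<bar> = \<bar>xm' l - dp * sqrt l\<bar>" by (simp add: xm_def abs_minus_commute)
      then show ?case using xm[OF elim] elim by (auto simp: good_def)
    qed
  qed
  show "\<exists>\<delta>>0. \<exists>xp xm :: real \<Rightarrow> real.
              (\<forall>\<^sub>F l in at_right 0. {y. \<bar>y\<bar> < \<delta> \<and> \<phi> l y = 0} = {xp l, xm l}) \<and>
              (\<lambda>l. xp l - sqrt (-A/F) * sqrt l) \<in> O[at_right 0](\<lambda>l. l) \<and>
              (\<lambda>l. xm l - (- sqrt (-A/F)) * sqrt l) \<in> O[at_right 0](\<lambda>l. l)"
    using \<delta>0 seteq o1 o2 unfolding dp_def by blast
qed

lemma PW_neg: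
  assumes "PW \<phi> \<phi>1 \<phi>2 r A F c l"
  shows "PW (\<lambda>y. - \<phi> y) (\<lambda>y. - \<phi>1 y) (\<lambda>y. - \<phi>2 y) r (-A) (-F) c l"
  using assms unfolding PW_def
  by (auto intro: DERIV_minus simp: abs_minus_commute)

lemma Dd_fun_sum:
  assumes "\<And>t. t \<in> T \<Longrightarrow> smooth (h t)"
  shows "Dd (\<lambda>x. \<Sum>t\<in>T. h t x) v x = (\<Sum>t\<in>T. Dd (h t) v x)"
proof -
  have "((\<lambda>x. \<Sum>t\<in>T. h t x) has_derivative (\<lambda>w. \<Sum>t\<in>T. frechet_derivative (h t) (at x) w)) (at x)"
    by (rule has_derivative_sum) (use assms smooth_hasder in blast)
  then have "frechet_derivative (\<lambda>x. \<Sum>t\<in>T. h t x) (at x) = (\<lambda>w. \<Sum>t\<in>T. frechet_derivative (h t) (at x) w)"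
    by (rule frechet_derivative_at[symmetric])
  then show ?thesis by (simp add: Dd_def)
qed

lemma deriv_line: "smooth g \<Longrightarrow> deriv (\<lambda>t. g (x + t *\<^sub>R v)) t = Dd g v (x + t *\<^sub>R v)"
  by (rule DERIV_imp_deriv[OF smooth_line])

lemma lip_max:
  fixes g :: "'a::euclidean_space \<Rightarrow> real"
  assumes "smooth g"
  shows "\<exists>K\<ge>0. \<forall>u w. norm u \<le> 1 \<longrightarrow> norm w \<le> 1 \<longrightarrow> \<bar>g u - g w\<bar> \<le> K * norm (u - w)"
proof -
  obtain K where K: "\<forall>u w. norm u \<le> 1 \<longrightarrow> norm w \<le> 1 \<longrightarrow> \<bar>g u - g w\<bar> \<le> K * norm (u - w)"
    using smooth_lip[OF assms] by blast
  have "\<bar>g u - g w\<bar> \<le> max 0 K * norm (u - w)" if "norm u \<le> 1" "norm w \<le> 1" for u w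
    using K that by (smt (verit) mult_right_mono norm_ge_zero)
  then show ?thesis by (intro exI[of _ "max 0 K"]) auto
qed

definition ee :: "'s::finite \<Rightarrow> (real^'s) \<times> real" where
  "ee s = (axis s 1, 0)"

lemma axis_scale: "axis s (t::real) = t *\<^sub>R axis s 1"
  by (simp add: vec_eq_iff axis_def)

lemma axis_ee: "(axis s (t::real), 0::real) = t *\<^sub>R ee s"
  by (simp add: ee_def axis_scale[of s t])

lemma axis_ee2: "(axis s (u::real) + axis t v, 0::real) = u *\<^sub>R ee s + v *\<^sub>R ee t"
  by (simp add: ee_def axis_scale[of s u] axis_scale[of t v])

lemma acoef_Dd:
  assumes "smooth f"
  shows "acoef f s = Dd f (ee s) 0"
proof -
  have "(\<lambda>t. f (axis s t, 0)) = (\<lambda>t. f (0 + t *\<^sub>R ee s))"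
    by (simp add: axis_ee)
  then show ?thesis unfolding acoef_def using deriv_line[OF assms, of 0 "ee s" 0] by simp
qed

lemma lcoef_Dd:
  assumes "smooth f"
  shows "lcoef f = Dd f (0, 1) 0"
proof -
  have "(\<lambda>l. f (0, l)) = (\<lambda>t. f (0 + t *\<^sub>R (0, 1)))" by auto
  then show ?thesis unfolding lcoef_def using deriv_line[OF assms, of 0 "(0,1)" 0] by (simp add: zero_prod_def)
qed

lemma fcoef_Dd:
  assumes "smooth f"
  shows "2 * fcoef f s t = Dd (Dd f (ee t)) (ee s) 0"
proof -
  have "deriv (\<lambda>v. f (axis s u + axis t v, 0)) 0 = Dd f (ee t) (0 + u *\<^sub>R ee s)" for u
  proof -
    have "(\<lambda>v. f (axis s u + axis t v, 0)) = (\<lambda>v. f (u *\<^sub>R ee s + v *\<^sub>R ee t))"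
      by (simp add: axis_ee2)
    then show ?thesis using deriv_line[OF assms, of "u *\<^sub>R ee s" "ee t" 0] by simp
  qed
  then have "(\<lambda>u. deriv (\<lambda>v. f (axis s u + axis t v, 0)) 0) = (\<lambda>u. Dd f (ee t) (0 + u *\<^sub>R ee s))"
    by auto
  then show ?thesis unfolding fcoef_def
    using deriv_line[OF smooth_Dd[OF assms], of "ee t" 0 "ee s" 0] by simp
qed

lemma sum_ee: "(\<Sum>s\<in>S. c s *\<^sub>R ee s) = ((\<chi> i. if i \<in> S then c i else 0), 0)"
proof -
  have f: "fst (\<Sum>s\<in>S. c s *\<^sub>R ee s) = (\<Sum>s\<in>S. c s *\<^sub>R axis s 1)"
    by (simp add: fst_sum ee_def)
  have g: "snd (\<Sum>s\<in>S. c s *\<^sub>R ee s) = 0"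
    by (simp add: snd_sum ee_def)
  have h: "(\<Sum>s\<in>S. c s *\<^sub>R axis s 1) $ i = (if i \<in> S then c i else 0)" for i
  proof -
    have "(\<Sum>s\<in>S. c s *\<^sub>R axis s 1) $ i = (\<Sum>s\<in>S. c s * (axis s 1 $ i))" by simp
    also have "\<dots> = (\<Sum>s\<in>S. if s = i then c s else 0)"
      by (rule sum.cong) (auto simp: axis_def)
    also have "\<dots> = (if i \<in> S then c i else 0)" by (simp add: sum.delta')
    finally show ?thesis .
  qed
  show ?thesis using f g h by (simp add: prod_eq_iff vec_eq_iff)
qed

lemma coefs:
  fixes f :: "(real^'s::finite) \<times> real \<Rightarrow> real" and sg :: "'s \<Rightarrow> 'c \<Rightarrow> 'c"
  assumes sm: "smooth f"
    and Ed: "E = ((\<chi> i. if i \<in> Lp sg p then 1 else 0) :: real^'s, 0::real)"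
    and Vd: "V = ((\<chi> i. if i \<in> Lp sg p then 0 else d (sg i p)) :: real^'s, 1::real)"
  shows "Dd f E 0 = (\<Sum>s\<in>Lp sg p. acoef f s)"
    and "Dd (Dd f E) E 0 = 2 * Fcoef sg f p"
    and "Dd f V 0 = Acoef sg f d p"
proof -
  let ?L = "Lp sg p"
  have E: "E = (\<Sum>s\<in>?L. 1 *\<^sub>R ee s)" unfolding Ed sum_ee by simp
  have DE: "Dd f E x = (\<Sum>s\<in>?L. Dd f (ee s) x)" for x
    unfolding E using Dd_sum[OF sm, where S="?L" and c="\<lambda>_. 1" and v=ee and x=x] by simp
  show "Dd f E 0 = (\<Sum>s\<in>?L. acoef f s)" using DE[of 0] acoef_Dd[OF sm] by simp
  have "Dd (Dd f E) E 0 = Dd (\<lambda>x. \<Sum>t\<in>?L. Dd f (ee t) x) E 0"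
  proof -
    have "Dd f E = (\<lambda>x. \<Sum>t\<in>?L. Dd f (ee t) x)" by (rule ext) (rule DE)
    then show ?thesis by simp
  qed
  also have "\<dots> = (\<Sum>t\<in>?L. Dd (Dd f (ee t)) E 0)"
    by (rule Dd_fun_sum) (rule smooth_Dd[OF sm])
  also have "\<dots> = (\<Sum>t\<in>?L. \<Sum>s\<in>?L. Dd (Dd f (ee t)) (ee s) 0)"
    unfolding E using Dd_sum[OF smooth_Dd[OF sm], where S="?L" and c="\<lambda>_. 1" and v=ee and x=0] by simp
  also have "\<dots> = (\<Sum>t\<in>?L. \<Sum>s\<in>?L. 2 * fcoef f s t)"
    using fcoef_Dd[OF sm] by simp
  also have "\<dots> = 2 * Fcoef sg f p"
    unfolding Fcoef_def by (simp add: sum_distrib_left) (rule sum.swap)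
  finally show "Dd (Dd f E) E 0 = 2 * Fcoef sg f p" .
  define cV where "cV i = (if i \<in> ?L then 0 else d (sg i p))" for i
  have V: "V = (\<Sum>s\<in>UNIV. cV s *\<^sub>R ee s) + (0, 1)"
    unfolding Vd sum_ee cV_def by simp
  have "Dd f V 0 = (\<Sum>s\<in>UNIV. cV s * Dd f (ee s) 0) + Dd f (0,1) 0"
    unfolding V by (simp add: Dd_add[OF sm] Dd_sum[OF sm])
  also have "\<dots> = (\<Sum>s\<in>UNIV. if s \<in> ?L then 0 else acoef f s * d (sg s p)) + lcoef f"
    using acoef_Dd[OF sm] lcoef_Dd[OF sm] by (auto simp: cV_def intro!: sum.cong)
  also have "\<dots> = Acoef sg f d p"
    unfolding Acoef_def by (simp add: sum.If_cases Diff_eq)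
  finally show "Dd f V 0 = Acoef sg f d p" .
qed

lemma comp_bound:
  fixes sg :: "'s::finite \<Rightarrow> 'c::finite \<Rightarrow> 'c"
  assumes H: "hypH sg xs d xi p" and X: "Xi sg xi p = 0"
  shows "\<exists>C. \<forall>\<^sub>F l in at_right 0. \<bar>if s \<in> Lp sg p then 0 else xs (sg s p) l - l * d (sg s p)\<bar> \<le> C * l^2"
proof (cases "s \<in> Lp sg p")
  case True then show ?thesis by (intro exI[of _ 0]) simp
next
  case False
  define q where "q = sg s p"
  have qp: "q \<noteq> p" using False by (simp add: Lp_def q_def)
  have "(q, p) \<in> edges sg" unfolding edges_def q_def by blast
  then have sa: "strictly_above sg q p" using qp unfolding strictly_above_def below_def by auto
  have "q \<in> Sigma_star sg p" using qp unfolding Sigma_star_def Sigma_img_def q_def by auto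
  then have "xi q \<le> Xi sg xi p" unfolding Xi_def by (intro Max_ge) auto
  then have x0: "xi q = 0" using X by simp
  have "(\<lambda>l. xs q l - d q * l powr (2 powr (- real (xi q))))
        \<in> O[at_right 0](\<lambda>l. l powr (2 powr (- (real (xi q) - 1))))"
    using H sa unfolding hypH_def by blast
  then have "(\<lambda>l. xs q l - d q * l powr 1) \<in> O[at_right 0](\<lambda>l. l powr 2)"
    using x0 by simp
  then obtain C where C: "\<forall>\<^sub>F l in at_right 0. norm (xs q l - d q * l powr 1) \<le> C * norm (l powr (2::real))"
    by (elim landau_o.bigE) auto
  have "\<forall>\<^sub>F l in at_right 0. \<bar>xs q l - l * d q\<bar> \<le> C * l^2"
    using C eventually_at_right_less[of 0]
  proof eventually_elim
    case (elim l)
    then show ?case by (simp add: mult.commute)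
  qed
  then show ?thesis using False by (intro exI[of _ C]) (simp add: q_def)
qed

lemma W_bound:
  fixes sg :: "'s::finite \<Rightarrow> 'c::finite \<Rightarrow> 'c"
  assumes H: "hypH sg xs d xi p" and X: "Xi sg xi p = 0"
    and Wd: "\<And>l. W l = ((\<chi> s. if s \<in> Lp sg p then 0 else xs (sg s p) l) :: real^'s, l)"
    and Vd: "V = ((\<chi> i. if i \<in> Lp sg p then 0 else d (sg i p)) :: real^'s, 1::real)"
  shows "\<exists>C\<ge>0. \<forall>\<^sub>F l in at_right 0. norm (W l - l *\<^sub>R V) \<le> C * l^2"
proof -
  define cp where "cp s l = (if s \<in> Lp sg p then 0 else xs (sg s p) l - l * d (sg s p))" for s l
  have "\<forall>s. \<exists>C. \<forall>\<^sub>F l in at_right 0. \<bar>cp s l\<bar> \<le> C * l^2"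
    using comp_bound[OF H X] unfolding cp_def by blast
  then obtain Cf where Cf: "\<And>s. \<forall>\<^sub>F l in at_right 0. \<bar>cp s l\<bar> \<le> Cf s * l^2" by metis
  have ev: "\<forall>\<^sub>F l in at_right 0. \<forall>s. \<bar>cp s l\<bar> \<le> Cf s * l^2"
    by (rule eventually_all_finite) (rule Cf)
  define C where "C = \<bar>\<Sum>s\<in>UNIV. Cf s\<bar>"
  have "\<forall>\<^sub>F l in at_right 0. norm (W l - l *\<^sub>R V) \<le> C * l^2"
    using ev
  proof eventually_elim
    case (elim l)
    have "W l - l *\<^sub>R V = ((\<chi> s. cp s l), 0)"
      unfolding Wd Vd cp_def by (simp add: prod_eq_iff vec_eq_iff)
    then have "norm (W l - l *\<^sub>R V) = norm ((\<chi> s. cp s l) :: real^'s)" by simp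
    also have "\<dots> \<le> (\<Sum>s\<in>UNIV. \<bar>cp s l\<bar>)" using norm_le_l1_cart[of "(\<chi> s. cp s l) :: real^'s"] by simp
    also have "\<dots> \<le> (\<Sum>s\<in>UNIV. Cf s * l^2)" by (rule sum_mono) (use elim in auto)
    also have "\<dots> = (\<Sum>s\<in>UNIV. Cf s) * l^2" by (simp add: sum_distrib_right)
    also have "\<dots> \<le> C * l^2" unfolding C_def by (simp add: mult_right_mono)
    finally show ?case .
  qed
  then show ?thesis by (intro exI[of _ C]) (auto simp: C_def)
qed

theorem lemma4p18:
  fixes sg :: "'s::finite \<Rightarrow> 'c::finite \<Rightarrow> 'c"
    and s1 :: 's
    and f :: "(real^'s) \<times> real \<Rightarrow> real"
    and B :: "'c set"
    and p :: 'c
    and xs :: "'c \<Rightarrow> real \<Rightarrow> real"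
    and d :: "'c \<Rightarrow> real"
    and xi :: "'c \<Rightarrow> nat"
  assumes net: "network sg s1"
    and smooth_f: "smooth f"
    and B_cond: "condB sg f"
    and max_noncrit: "\<forall>q. maximal sg q \<longrightarrow> \<not> critical sg f q"
    and root: "root_subnetwork sg f B"
    and p_notin: "p \<notin> B"
    and p_crit: "critical sg f p"
    and H: "hypH sg xs d xi p"
    and L: "condL sg f d xi p"
    and generic: "Fcoef sg f p \<noteq> 0"
  shows
    "(Acoef sg f d p / Fcoef sg f p > 0 \<longrightarrow>
        (\<exists>\<delta>>0. \<forall>\<^sub>F l in at_right 0. \<forall>y. \<bar>y\<bar> < \<delta> \<longrightarrow> peq f sg xs p y l \<noteq> 0))
   \<and> (Acoef sg f d p / Fcoef sg f p < 0 \<longrightarrow>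
        (let dp = sqrt (- Acoef sg f d p / Fcoef sg f p) in
           dp \<noteq> 0 \<and>
           (\<exists>\<delta>>0. \<exists>xp xm :: real \<Rightarrow> real.
              (\<forall>\<^sub>F l in at_right 0. {y. \<bar>y\<bar> < \<delta> \<and> peq f sg xs p y l = 0} = {xp l, xm l}) \<and>
              (\<lambda>l. xp l - dp * sqrt l) \<in> O[at_right 0](\<lambda>l. l) \<and>
              (\<lambda>l. xm l - (- dp) * sqrt l) \<in> O[at_right 0](\<lambda>l. l))))"
proof -
  let ?L = "Lp sg p"
  define E where "E = ((\<chi> i. if i \<in> ?L then 1 else 0) :: real^'s, 0::real)"
  define V where "V = ((\<chi> i. if i \<in> ?L then 0 else d (sg i p)) :: real^'s, 1::real)"
  define W where "W l = ((\<chi> s. if s \<in> ?L then 0 else xs (sg s p) l) :: real^'s, l)" for l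
  define A where "A = Acoef sg f d p"
  define F where "F = Fcoef sg f p"
  define g1 where "g1 = Dd f E"
  define g2 where "g2 = Dd g1 E"
  define gV where "gV = Dd f V"
  have sm1: "smooth g1" and sm2: "smooth g2" and smV: "smooth gV"
    unfolding g1_def g2_def gV_def using smooth_Dd smooth_f by blast+
  have f0: "f 0 = 0" using B_cond unfolding condB_def by (simp add: zero_prod_def)
  have g10: "g1 0 = 0" unfolding g1_def using coefs(1)[OF smooth_f E_def V_def] p_crit
    by (simp add: critical_def)
  have g20: "g2 0 = 2*F" unfolding g2_def g1_def F_def using coefs(2)[OF smooth_f E_def V_def] .
  have gV0: "gV 0 = A" unfolding gV_def A_def using coefs(3)[OF smooth_f E_def V_def] .
  have peq: "peq f sg xs p y l = f (W l + y *\<^sub>R E)" for y l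
  proof -
    have "(\<chi> s. ((\<lambda>c. xs c l)(p := y)) (sg s p), l) = W l + y *\<^sub>R E"
      unfolding W_def E_def by (simp add: prod_eq_iff vec_eq_iff Lp_def)
    then show ?thesis unfolding peq_def gamma_def by simp
  qed
  obtain K0 where K0: "K0 \<ge> 0" "\<And>u w. norm u \<le> 1 \<Longrightarrow> norm w \<le> 1 \<Longrightarrow> \<bar>f u - f w\<bar> \<le> K0 * norm (u - w)"
    using lip_max[OF smooth_f] by blast
  obtain K1 where K1: "K1 \<ge> 0" "\<And>u w. norm u \<le> 1 \<Longrightarrow> norm w \<le> 1 \<Longrightarrow> \<bar>g1 u - g1 w\<bar> \<le> K1 * norm (u - w)"
    using lip_max[OF sm1] by blast
  obtain K2 where K2: "K2 \<ge> 0" "\<And>u w. norm u \<le> 1 \<Longrightarrow> norm w \<le> 1 \<Longrightarrow> \<bar>g2 u - g2 w\<bar> \<le> K2 * norm (u - w)"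
    using lip_max[OF sm2] by blast
  obtain KV where KV: "KV \<ge> 0" "\<And>u w. norm u \<le> 1 \<Longrightarrow> norm w \<le> 1 \<Longrightarrow> \<bar>gV u - gV w\<bar> \<le> KV * norm (u - w)"
    using lip_max[OF smV] by blast
  define Kl where "Kl = K0 + K1 + K2 + KV"
  have Kl: "Kl \<ge> K0" "Kl \<ge> K1" "Kl \<ge> K2" "Kl \<ge> KV" "Kl \<ge> 0" using K0 K1 K2 KV by (auto simp: Kl_def)
  have X0: "Xi sg xi p = 0" using L unfolding condL_def by simp
  obtain C where C: "C \<ge> 0" "\<forall>\<^sub>F l in at_right 0. norm (W l - l *\<^sub>R V) \<le> C * l^2"
    using W_bound[OF H X0 W_def V_def] by blast
  define nE where "nE = norm E"
  define nV where "nV = norm V"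
  define r where "r = 1 / (2*(nE+1))"
  define cc where "cc = Kl*(C + nV + nE) + 1"
  have r0: "r > 0"
  proof -
    have "2*(nE+1) > 0" unfolding nE_def by (smt (verit) norm_ge_zero)
    then show ?thesis unfolding r_def by simp
  qed
  have cc0: "cc > 0"
  proof -
    have "C + nV + nE \<ge> 0" unfolding nV_def nE_def using C(1) by (smt (verit) norm_ge_zero)
    then have "Kl*(C+nV+nE) \<ge> 0" using Kl(5) by simp
    then show ?thesis unfolding cc_def by linarith
  qed
  have rE: "r * nE \<le> 1/2"
  proof -
    have pos: "2*(nE+1) > 0" unfolding nE_def by (smt (verit) norm_ge_zero)
    have "r * nE = nE / (2*(nE+1))" by (simp add: r_def)
    also have "\<dots> \<le> 1/2" by (subst pos_divide_le_eq[OF pos]) simp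
    finally show ?thesis .
  qed
  define \<phi> where "\<phi> l y = f (W l + y *\<^sub>R E)" for l y
  define \<phi>1 where "\<phi>1 l y = g1 (W l + y *\<^sub>R E)" for l y
  define \<phi>2 where "\<phi>2 l y = g2 (W l + y *\<^sub>R E)" for l y
  have e1: "1 / (2*(C+nV+1)) > 0"
  proof -
    have "2*(C+nV+1) > 0" unfolding nV_def using C(1) by (smt (verit) norm_ge_zero)
    then show ?thesis by simp
  qed
  have PWev: "\<forall>\<^sub>F l in at_right 0. PW (\<phi> l) (\<phi>1 l) (\<phi>2 l) r A F cc l"
    using C(2) eventually_at_right_less[of 0] ev_small[OF e1] ev_small[OF zero_less_one]
  proof eventually_elim
    case (elim l)
    have l: "0 < l" "l < 1" "l < 1 / (2*(C+nV+1))" using elim by auto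
    have wb: "norm (W l - l *\<^sub>R V) \<le> C * l^2" using elim by auto
    have ll: "l^2 \<le> l" using l by (simp add: power2_eq_square mult_left_le)
    have nV0: "nV \<ge> 0" by (simp add: nV_def)
    have lCV: "(C+nV)*l \<le> 1/2" using l C nV0 by (simp add: field_simps)
    have nlV: "norm (l *\<^sub>R V) = l * nV" using l by (simp add: nV_def)
    have nW: "norm (W l) \<le> (C+nV)*l"
    proof -
      have "norm (W l) \<le> norm (W l - l *\<^sub>R V) + norm (l *\<^sub>R V)" using norm_triangle_sub[of "W l" "l *\<^sub>R V"] by simp
      also have "\<dots> \<le> C*l + l*nV"
      proof -
        have "C*l^2 \<le> C*l" using mult_left_mono[OF ll C(1)] .
        then show ?thesis using wb nlV by linarith
      qed
      finally show ?thesis by (simp add: algebra_simps)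
    qed
    have nlV1: "norm (l *\<^sub>R V) \<le> 1"
    proof -
      have "C*l \<ge> 0" using C(1) l by simp
      then have "l*nV \<le> (C+nV)*l" by (simp add: algebra_simps)
      then show ?thesis using nlV lCV by linarith
    qed
    have nW1: "norm (W l) \<le> 1" using nW lCV by simp
    have nWy: "norm (W l + y *\<^sub>R E) \<le> (C+nV)*l + \<bar>y\<bar>*nE" for y
    proof -
      have "norm (W l + y *\<^sub>R E) \<le> norm (W l) + norm (y *\<^sub>R E)" by (rule norm_triangle_ineq)
      then show ?thesis using nW by (simp add: nE_def)
    qed
    have nWy1: "norm (W l + y *\<^sub>R E) \<le> 1" if "\<bar>y\<bar> < r" for y
    proof -
      have "\<bar>y\<bar>*nE \<le> r*nE" using that by (simp add: nE_def mult_right_mono)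
      then show ?thesis using nWy[of y] lCV rE by linarith
    qed
    have n0: "norm (0::(real^'s) \<times> real) \<le> 1" by simp
    show ?case unfolding PW_def
    proof (intro conjI allI impI)
      fix y :: real assume y: "\<bar>y\<bar> < r"
      show "(\<phi> l has_real_derivative \<phi>1 l y) (at y)"
        unfolding \<phi>_def \<phi>1_def g1_def using smooth_line[OF smooth_f] by blast
      show "(\<phi>1 l has_real_derivative \<phi>2 l y) (at y)"
        unfolding \<phi>1_def \<phi>2_def g2_def using smooth_line[OF sm1] by blast
      have "\<bar>\<phi>2 l y - 2*F\<bar> = \<bar>g2 (W l + y *\<^sub>R E) - g2 0\<bar>" unfolding \<phi>2_def g20 by simp
      also have "\<dots> \<le> K2 * norm (W l + y *\<^sub>R E - 0)" using K2(2)[OF nWy1[OF y] n0] .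
      also have "\<dots> \<le> Kl * ((C+nV)*l + \<bar>y\<bar>*nE)"
        using nWy[of y] Kl K2 by (simp add: mult_mono)
      also have "\<dots> \<le> cc * (\<bar>y\<bar> + l)"
      proof -
        have "Kl * ((C+nV)*l + \<bar>y\<bar>*nE) \<le> Kl*(C+nV+nE) * (\<bar>y\<bar> + l)"
          using Kl C nV0 l by (simp add: algebra_simps nE_def add_nonneg_nonneg mult_nonneg_nonneg)
        also have "\<dots> \<le> cc * (\<bar>y\<bar> + l)" unfolding cc_def using l by (simp add: algebra_simps)
        finally show ?thesis .
      qed
      finally show "\<bar>\<phi>2 l y - 2*F\<bar> \<le> cc * (\<bar>y\<bar> + l)" .
    next
      show "\<bar>\<phi>1 l 0\<bar> \<le> cc * l"
      proof -
        have "\<bar>\<phi>1 l 0\<bar> = \<bar>g1 (W l) - g1 0\<bar>" unfolding \<phi>1_def g10 by simp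
        also have "\<dots> \<le> K1 * norm (W l - 0)" using K1(2)[OF nW1 n0] .
        also have "\<dots> \<le> Kl * ((C+nV)*l)" using nW Kl K1 by (simp add: mult_mono)
        also have "\<dots> \<le> cc * l" unfolding cc_def using l Kl by (simp add: algebra_simps nE_def)
        finally show ?thesis .
      qed
    next
      show "\<bar>\<phi> l 0 - A*l\<bar> \<le> cc * l^2"
      proof -
        have a: "\<bar>f (W l) - f (l *\<^sub>R V)\<bar> \<le> Kl * (C * l^2)"
        proof -
          have "\<bar>f (W l) - f (l *\<^sub>R V)\<bar> \<le> K0 * norm (W l - l *\<^sub>R V)" using K0(2)[OF nW1 nlV1] .
          also have "\<dots> \<le> Kl * (C * l^2)" using wb Kl K0 by (simp add: mult_mono)
          finally show ?thesis .
        qed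
        obtain z where z: "0 < z" "z < l" "f (0 + l *\<^sub>R V) - f (0 + 0 *\<^sub>R V) = (l - 0) * Dd f V (0 + z *\<^sub>R V)"
          using MVT2[of 0 l "\<lambda>t. f (0 + t *\<^sub>R V)" "\<lambda>t. Dd f V (0 + t *\<^sub>R V)"] smooth_line[OF smooth_f] l
          by blast
        have fz: "f (l *\<^sub>R V) = l * gV (z *\<^sub>R V)" using z f0 unfolding gV_def by simp
        have nz: "norm (z *\<^sub>R V) \<le> 1"
        proof -
          have "z*nV \<le> l*nV" using mult_right_mono[OF less_imp_le[OF z(2)] nV0] .
          moreover have "norm (z *\<^sub>R V) = z*nV" using z by (simp add: nV_def)
          ultimately show ?thesis using nlV nlV1 by linarith
        qed
        have "\<bar>gV (z *\<^sub>R V) - A\<bar> \<le> KV * norm (z *\<^sub>R V - 0)" using KV(2)[OF nz n0] gV0 by simp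
        also have "\<dots> \<le> Kl * (l * nV)" using z Kl KV nV0
          by (simp add: nV_def mult_mono)
        finally have b0: "\<bar>gV (z *\<^sub>R V) - A\<bar> \<le> Kl * (l * nV)" .
        have b: "\<bar>f (l *\<^sub>R V) - A*l\<bar> \<le> Kl * nV * l^2"
        proof -
          have "f (l *\<^sub>R V) - A*l = l * (gV (z *\<^sub>R V) - A)" using fz by (simp add: algebra_simps)
          then have "\<bar>f (l *\<^sub>R V) - A*l\<bar> = l * \<bar>gV (z *\<^sub>R V) - A\<bar>" using l by (simp add: abs_mult)
          also have "\<dots> \<le> l * (Kl * (l * nV))" using b0 l by (simp add: mult_left_mono)
          finally show ?thesis by (simp add: power2_eq_square algebra_simps)
        qed
        have "\<bar>\<phi> l 0 - A*l\<bar> \<le> Kl * (C * l^2) + Kl * nV * l^2"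
          using a b unfolding \<phi>_def by simp
        also have "\<dots> \<le> cc * l^2"
        proof -
          have "Kl * (C * l^2) + Kl * nV * l^2 = Kl*(C+nV) * l^2" by (simp add: algebra_simps)
          also have "\<dots> \<le> cc * l^2" unfolding cc_def
            using Kl nE_def by (simp add: algebra_simps mult_right_mono)
          finally show ?thesis .
        qed
        finally show ?thesis .
      qed
    qed
  qed
  have peq\<phi>: "peq f sg xs p y l = \<phi> l y" for y l using peq unfolding \<phi>_def by simp
  have F0: "F \<noteq> 0" using generic F_def by simp
  have res: "(A/F > 0 \<longrightarrow> (\<exists>\<delta>>0. \<forall>\<^sub>F l in at_right 0. \<forall>y. \<bar>y\<bar> < \<delta> \<longrightarrow> \<phi> l y \<noteq> 0))
   \<and> (A/F < 0 \<longrightarrow> (\<exists>\<delta>>0. \<exists>xp xm :: real \<Rightarrow> real.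
              (\<forall>\<^sub>F l in at_right 0. {y. \<bar>y\<bar> < \<delta> \<and> \<phi> l y = 0} = {xp l, xm l}) \<and>
              (\<lambda>l. xp l - sqrt (-A/F) * sqrt l) \<in> O[at_right 0](\<lambda>l. l) \<and>
              (\<lambda>l. xm l - (- sqrt (-A/F)) * sqrt l) \<in> O[at_right 0](\<lambda>l. l)))"
  proof (cases "F > 0")
    case True
    have "A/F > 0 \<longleftrightarrow> A > 0" "A/F < 0 \<longleftrightarrow> A < 0" using True
      by (auto simp: zero_less_divide_iff divide_less_0_iff)
    then show ?thesis using alg[OF True cc0 r0 PWev] by simp
  next
    case False
    then have Fn: "-F > 0" using F0 by simp
    have ev': "\<forall>\<^sub>F l in at_right 0. PW (\<lambda>y. - \<phi> l y) (\<lambda>y. - \<phi>1 l y) (\<lambda>y. - \<phi>2 l y) r (-A) (-F) cc l"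
      using PWev by eventually_elim (rule PW_neg)
    have R: "(-A > 0 \<longrightarrow> (\<exists>\<delta>>0. \<forall>\<^sub>F l in at_right 0. \<forall>y. \<bar>y\<bar> < \<delta> \<longrightarrow> - \<phi> l y \<noteq> 0))
   \<and> (-A < 0 \<longrightarrow> (\<exists>\<delta>>0. \<exists>xp xm :: real \<Rightarrow> real.
              (\<forall>\<^sub>F l in at_right 0. {y. \<bar>y\<bar> < \<delta> \<and> - \<phi> l y = 0} = {xp l, xm l}) \<and>
              (\<lambda>l. xp l - sqrt (-(-A)/(-F)) * sqrt l) \<in> O[at_right 0](\<lambda>l. l) \<and>
              (\<lambda>l. xm l - (- sqrt (-(-A)/(-F))) * sqrt l) \<in> O[at_right 0](\<lambda>l. l)))"
      by (rule alg[OF Fn cc0 r0 ev'])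
    have "A/F > 0 \<longleftrightarrow> -A > 0" "A/F < 0 \<longleftrightarrow> -A < 0" using False F0
      by (auto simp: zero_less_divide_iff divide_less_0_iff)
    moreover have "-(-A)/(-F) = -A/F" by simp
    ultimately show ?thesis using R by simp
  qed
  have dpnz: "A/F < 0 \<Longrightarrow> sqrt (-A/F) \<noteq> 0" by (auto simp: divide_less_0_iff)
  show ?thesis unfolding Let_def peq\<phi> A_def[symmetric] F_def[symmetric] using res dpnz by blast
qed

end
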